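(* Let $\mathcal H=(M,n,\mathcal R)$ be a BMS, let $S\subseteq\mathbb R^n$ be a bounded convex polytope, and let $x_0$ be a point in the interior of $S$. Then the scheduler has a winning strategy from $x_0$ in the schedulability game with safety set $S$ if and only if $\mathcal H$ is safe.
   Context: A multi-mode system is a tuple $\mathcal H=(M,n,\mathcal R)$ with $M$ a finite nonempty set of modes, $n\ge1$ variables, and $\mathcal R:M\to 2^{\mathbb R^n}$ giving nonempty rate sets; it is a BMS if each $\mathcal R(m)$ is a bounded convex polytope, and a CMS if each $\mathcal R(m)$ is a singleton. An instance of $(M,n,\mathcal R)$ is a CMS $(M,n,R)$ with $R(m)\in\mathcal R(m)$ for all $m$. A CMS $(M,n,R)$ is safe if there are $t_m\ge0$ with $\sum_m t_m=1$ and $\sum_m t_mR(m)=\vec0$. $\mathrm{Ext}(\mathcal H)=(M,n,\mathcal R')$ where $\mathcal R'(m)$ is the vertex set of $\mathcal R(m)$; $\mathcal H$ is safe if every instance of $\mathrm{Ext}(\mathcal H)$ is safe. The schedulability game from $x_0$: in round $i\ge1$ the scheduler chooses $(m_i,t_i)\in M\times\mathbb R_{>0}$, the environment chooses $r_i\in\mathcal R(m_i)$, and $x_i=x_{i-1}+t_ir_i$. Scheduler strategies map finite histories $\langle x_0,(m_1,t_1),r_1,x_1,\dots,x_k\rangle$ to timed moves; environment strategies map a history and the current timed move $(m,t)$ to a rate in $\mathcal R(m)$. A run is $S$-safe if $x_i\in S$ and $x_i+tr_{i+1}\in S$ for all $i\ge0$, $t\in[0,t_{i+1}]$, and non-Zeno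 if $\sum_it_i=\infty$. A scheduler strategy is winning if against every environment strategy the run is $S$-safe and non-Zeno. *)

theory Defs
  imports "HOL-Analysis.Analysis"
begin

text \<open>Points of R^n are elements of type real^'n ('n a finite index type, so n = CARD('n) \<ge> 1).
 A multi-mode system is given by a finite nonempty mode set M and a rate-set map.\<close>

definition is_BMS :: "'m set \<Rightarrow> ('m \<Rightarrow> (real^'n) set) \<Rightarrow> bool" where
  "is_BMS M Rs \<longleftrightarrow> finite M \<and> M \<noteq> {} \<and>
     (\<forall>m\<in>M. Rs m \<noteq> {} \<and> polytope (Rs m))"

definition cms_safe :: "'m set \<Rightarrow> ('m \<Rightarrow> real^'n) \<Rightarrow> bool" where
  "cms_safe M R \<longleftrightarrow> (\<exists>t::'m \<Rightarrow> real. (\<forall>m\<in>M. t m \<ge> 0) \<and> (\<Sum>m\<in>M. t m) = 1 \<and>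
       (\<Sum>m\<in>M. t m *\<^sub>R R m) = 0)"

definition vertices :: "(real^'n) set \<Rightarrow> (real^'n) set" where
  "vertices P = {v. v extreme_point_of P}"

definition mms_safe :: "'m set \<Rightarrow> ('m \<Rightarrow> (real^'n) set) \<Rightarrow> bool" where
  "mms_safe M Rs \<longleftrightarrow> (\<forall>R. (\<forall>m\<in>M. R m \<in> vertices (Rs m)) \<longrightarrow> cms_safe M R)"

text \<open>A history (after x0, which is fixed) is the list of rounds ((m_i,t_i), r_i);
 the states x_i are determined by x0 and the rounds.\<close>
type_synonym ('m, 'n) history = "(('m \<times> real) \<times> (real^'n)) list"

definition sched_strategy :: "'m set \<Rightarrow> (('m,'n) history \<Rightarrow> 'm \<times> real) \<Rightarrow> bool" where
  "sched_strategy M \<sigma> \<longleftrightarrow> (\<forall>h. fst (\<sigma> h) \<in> M \<and> snd (\<sigma> h) > 0)"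

definition env_strategy :: "'m set \<Rightarrow> ('m \<Rightarrow> (real^'n) set) \<Rightarrow>
     (('m,'n) history \<Rightarrow> 'm \<times> real \<Rightarrow> real^'n) \<Rightarrow> bool" where
  "env_strategy M Rs \<pi> \<longleftrightarrow> (\<forall>h m t. m \<in> M \<longrightarrow> \<pi> h (m, t) \<in> Rs m)"

fun play :: "(('m,'n) history \<Rightarrow> 'm \<times> real) \<Rightarrow> (('m,'n) history \<Rightarrow> 'm \<times> real \<Rightarrow> real^'n)
      \<Rightarrow> nat \<Rightarrow> ('m,'n) history" where
  "play \<sigma> \<pi> 0 = []"
| "play \<sigma> \<pi> (Suc k) = play \<sigma> \<pi> k @ [(\<sigma> (play \<sigma> \<pi> k), \<pi> (play \<sigma> \<pi> k) (\<sigma> (play \<sigma> \<pi> k)))]"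

text \<open>Round i+1 (0-indexed as i): timed move and rate.\<close>
definition move_at :: "(('m,'n) history \<Rightarrow> 'm \<times> real) \<Rightarrow> (('m,'n) history \<Rightarrow> 'm \<times> real \<Rightarrow> real^'n)
      \<Rightarrow> nat \<Rightarrow> 'm \<times> real" where
  "move_at \<sigma> \<pi> i = \<sigma> (play \<sigma> \<pi> i)"

definition rate_at :: "(('m,'n) history \<Rightarrow> 'm \<times> real) \<Rightarrow> (('m,'n) history \<Rightarrow> 'm \<times> real \<Rightarrow> real^'n)
      \<Rightarrow> nat \<Rightarrow> real^'n" where
  "rate_at \<sigma> \<pi> i = \<pi> (play \<sigma> \<pi> i) (move_at \<sigma> \<pi> i)"

definition state_at :: "real^'n \<Rightarrow> (('m,'n) history \<Rightarrow> 'm \<times> real) \<Rightarrow>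
      (('m,'n) history \<Rightarrow> 'm \<times> real \<Rightarrow> real^'n) \<Rightarrow> nat \<Rightarrow> real^'n" where
  "state_at x0 \<sigma> \<pi> i = x0 + (\<Sum>j<i. snd (move_at \<sigma> \<pi> j) *\<^sub>R rate_at \<sigma> \<pi> j)"

definition run_safe :: "(real^'n) set \<Rightarrow> real^'n \<Rightarrow> (('m,'n) history \<Rightarrow> 'm \<times> real) \<Rightarrow>
      (('m,'n) history \<Rightarrow> 'm \<times> real \<Rightarrow> real^'n) \<Rightarrow> bool" where
  "run_safe S x0 \<sigma> \<pi> \<longleftrightarrow> (\<forall>i. state_at x0 \<sigma> \<pi> i \<in> S \<and>
      (\<forall>t. 0 \<le> t \<and> t \<le> snd (move_at \<sigma> \<pi> i) \<longrightarrow> state_at x0 \<sigma> \<pi> i + t *\<^sub>R rate_at \<sigma> \<pi> i \<in> S))"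

definition run_nonzeno :: "(('m,'n) history \<Rightarrow> 'm \<times> real) \<Rightarrow>
      (('m,'n) history \<Rightarrow> 'm \<times> real \<Rightarrow> real^'n) \<Rightarrow> bool" where
  "run_nonzeno \<sigma> \<pi> \<longleftrightarrow> filterlim (\<lambda>k. \<Sum>i<k. snd (move_at \<sigma> \<pi> i)) at_top sequentially"

definition winning :: "'m set \<Rightarrow> ('m \<Rightarrow> (real^'n) set) \<Rightarrow> (real^'n) set \<Rightarrow> real^'n \<Rightarrow>
      (('m,'n) history \<Rightarrow> 'm \<times> real) \<Rightarrow> bool" where
  "winning M Rs S x0 \<sigma> \<longleftrightarrow> sched_strategy M \<sigma> \<and>
     (\<forall>\<pi>. env_strategy M Rs \<pi> \<longrightarrow> run_safe S x0 \<sigma> \<pi> \<and> run_nonzeno \<sigma> \<pi>)"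

end

theory Submission
  imports Defs
begin

definition hst :: "real^'n \<Rightarrow> ('m,'n) history \<Rightarrow> real^'n" where
  "hst x0 h = x0 + sum_list (map (\<lambda>((m,t),r). t *\<^sub>R r) h)"

lemma length_play: "length (play \<sigma> \<pi> i) = i"
  by (induction i) auto

lemma hst_play: "hst x0 (play \<sigma> \<pi> i) = state_at x0 \<sigma> \<pi> i"
proof (induction i)
  case 0 then show ?case by (simp add: hst_def state_at_def)
next
  case (Suc i)
  have "state_at x0 \<sigma> \<pi> (Suc i) = state_at x0 \<sigma> \<pi> i + snd (move_at \<sigma> \<pi> i) *\<^sub>R rate_at \<sigma> \<pi> i"
    by (simp add: state_at_def)
  moreover have "hst x0 (play \<sigma> \<pi> (Suc i)) = hst x0 (play \<sigma> \<pi> i) + snd (move_at \<sigma> \<pi> i) *\<^sub>R rate_at \<sigma> \<pi> i"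
    by (simp add: move_at_def rate_at_def hst_def case_prod_beta add.assoc)
  ultimately show ?case using Suc by simp
qed

lemma vertices_sub: "vertices P \<subseteq> P"
  by (auto simp: vertices_def extreme_point_of_def)

lemma cond_from_safe:
  assumes bms: "is_BMS M Rs" and safe: "mms_safe M Rs"
  shows "\<exists>m\<in>M. \<forall>r\<in>Rs m. inner w r \<le> 0"
proof (rule ccontr)
  assume "\<not> ?thesis"
  then have ex: "\<forall>m\<in>M. \<exists>r\<in>Rs m. inner w r > 0" by (auto simp: not_le)
  have "\<forall>m\<in>M. \<exists>v\<in>vertices (Rs m). inner w v > 0"
  proof
    fix m assume mM: "m \<in> M"
    then have poly: "polytope (Rs m)" using bms by (auto simp: is_BMS_def)
    have KM: "Rs m = convex hull (vertices (Rs m))"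
      unfolding vertices_def
      by (rule Krein_Milman_Minkowski) (use poly polytope_imp_compact polytope_imp_convex in auto)
    show "\<exists>v\<in>vertices (Rs m). inner w v > 0"
    proof (rule ccontr)
      assume "\<not> ?thesis"
      then have "vertices (Rs m) \<subseteq> {x. inner w x \<le> 0}" by (auto simp: not_less)
      then have "convex hull (vertices (Rs m)) \<subseteq> {x. inner w x \<le> 0}"
        by (intro hull_minimal convex_halfspace_le)
      then show False using ex mM KM by fastforce
    qed
  qed
  then obtain R where R: "\<forall>m\<in>M. R m \<in> vertices (Rs m) \<and> inner w (R m) > 0"
    by metis
  then obtain t where t: "\<forall>m\<in>M. t m \<ge> 0" "(\<Sum>m\<in>M. t m) = 1" "(\<Sum>m\<in>M. t m *\<^sub>R R m) = 0"
    using safe by (auto simp: mms_safe_def cms_safe_def)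
  have fin: "finite M" using bms by (auto simp: is_BMS_def)
  have "(\<Sum>m\<in>M. t m * inner w (R m)) = inner w (\<Sum>m\<in>M. t m *\<^sub>R R m)"
    by (simp add: inner_sum_right)
  also have "\<dots> = 0" using t by simp
  finally have "\<forall>m\<in>M. t m * inner w (R m) = 0"
  proof -
    assume s0: "(\<Sum>m\<in>M. t m * inner w (R m)) = 0"
    have "\<forall>m\<in>M. 0 \<le> t m * inner w (R m)" using t R by (simp add: less_imp_le)
    then show ?thesis using sum_nonneg_eq_0_iff[OF fin, of "\<lambda>m. t m * inner w (R m)"] s0 by blast
  qed
  then have "\<forall>m\<in>M. t m = 0" using R by (metis less_irrefl mult_eq_0_iff)
  then show False using t(2) by simp
qed

lemma hull_safe:
  assumes fin: "finite M" and h: "0 \<in> convex hull (R ` M)"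
  shows "cms_safe M R"
proof -
  obtain u where u: "\<forall>y\<in>R`M. 0 \<le> u y" "sum u (R`M) = 1" "(\<Sum>y\<in>R`M. u y *\<^sub>R y) = 0"
    using h by (auto simp: convex_hull_finite[OF finite_imageI[OF fin]])
  define c where "c y = real (card {m\<in>M. R m = y})" for y
  have cpos: "c y > 0" if "y \<in> R`M" for y
  proof -
    have "{m\<in>M. R m = y} \<noteq> {}" using that by auto
    moreover have "finite {m\<in>M. R m = y}" using fin by auto
    ultimately show ?thesis unfolding c_def by (simp add: card_gt_0_iff)
  qed
  define t where "t m = u (R m) / c (R m)" for m
  have inner1: "(\<Sum>m\<in>{x\<in>M. R x = y}. t m) = u y" if "y \<in> R`M" for y
  proof -
    have "(\<Sum>m\<in>{x\<in>M. R x = y}. t m) = (\<Sum>m\<in>{x\<in>M. R x = y}. u y / c y)"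
      by (rule sum.cong) (auto simp: t_def)
    also have "\<dots> = u y" using cpos[OF that] by (simp add: c_def)
    finally show ?thesis .
  qed
  have inner2: "(\<Sum>m\<in>{x\<in>M. R x = y}. t m *\<^sub>R R m) = u y *\<^sub>R y" if "y \<in> R`M" for y
  proof -
    have "(\<Sum>m\<in>{x\<in>M. R x = y}. t m *\<^sub>R R m) = (\<Sum>m\<in>{x\<in>M. R x = y}. t m) *\<^sub>R y"
      by (simp add: scaleR_sum_left)
    then show ?thesis using inner1[OF that] by simp
  qed
  have "(\<Sum>m\<in>M. t m) = (\<Sum>y\<in>R`M. \<Sum>m\<in>{x\<in>M. R x = y}. t m)"
    by (rule sum.image_gen[OF fin])
  also have "\<dots> = 1" using inner1 u by simp
  finally have s1: "(\<Sum>m\<in>M. t m) = 1" .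
  have "(\<Sum>m\<in>M. t m *\<^sub>R R m) = (\<Sum>y\<in>R`M. \<Sum>m\<in>{x\<in>M. R x = y}. t m *\<^sub>R R m)"
    by (rule sum.image_gen[OF fin])
  also have "\<dots> = 0" using inner2 u by simp
  finally have s2: "(\<Sum>m\<in>M. t m *\<^sub>R R m) = 0" .
  have "\<forall>m\<in>M. t m \<ge> 0" unfolding t_def
  proof
    fix m assume "m \<in> M"
    then have "0 \<le> u (R m)" "0 < c (R m)" using u cpos by auto
    then show "0 \<le> u (R m) / c (R m)" by simp
  qed
  then show ?thesis using s1 s2 unfolding cms_safe_def by blast
qed

lemma winning_imp_safe:
  fixes M :: "'m set" and Rs :: "'m \<Rightarrow> (real^'n) set"
  assumes bms: "is_BMS M Rs" and polyS: "polytope S" and win: "winning M Rs S x0 \<sigma>"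
  shows "mms_safe M Rs"
  unfolding mms_safe_def
proof (intro allI impI)
  fix R assume RV: "\<forall>m\<in>M. R m \<in> vertices (Rs m)"
  have fin: "finite M" using bms by (auto simp: is_BMS_def)
  show "cms_safe M R"
  proof (rule ccontr)
    assume ns: "\<not> cms_safe M R"
    then have "0 \<notin> convex hull (R ` M)" using hull_safe[OF fin] by blast
    then obtain a b where ab: "a \<noteq> 0" "0 < b" "\<forall>x\<in>convex hull (R`M). inner a x > b"
    proof -
      have "closed (convex hull (R`M))"
        by (rule compact_imp_closed, rule finite_imp_compact_convex_hull) (use fin in simp)
      from separating_hyperplane_closed_0[OF convex_convex_hull this \<open>0 \<notin> convex hull (R ` M)\<close>]
      show ?thesis using that by blast
    qed
    have aR: "inner a (R m) > b" if "m \<in> M" for m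
      using ab(3) hull_subset[of "R`M" convex] that by blast
    define \<pi> where "\<pi> = (\<lambda>(h::('m,'n) history) (mt::'m\<times>real). R (fst mt))"
    have env: "env_strategy M Rs \<pi>"
      using RV vertices_sub by (fastforce simp: env_strategy_def \<pi>_def)
    have sch: "sched_strategy M \<sigma>" using win by (simp add: winning_def)
    have rs: "run_safe S x0 \<sigma> \<pi>" and nz: "run_nonzeno \<sigma> \<pi>"
      using win env by (auto simp: winning_def)
    obtain K where K: "\<forall>y\<in>S. norm y \<le> K"
      using polytope_imp_bounded[OF polyS] by (auto simp: bounded_iff)
    have lower: "inner a (state_at x0 \<sigma> \<pi> k) \<ge> inner a x0 + b * (\<Sum>i<k. snd (move_at \<sigma> \<pi> i))" for k
    proof -
      have "inner a (state_at x0 \<sigma> \<pi> k) = inner a x0 + (\<Sum>j<k. snd (move_at \<sigma> \<pi> j) * inner a (rate_at \<sigma> \<pi> j))"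
        by (simp add: state_at_def inner_add_right inner_sum_right)
      moreover have "(\<Sum>j<k. snd (move_at \<sigma> \<pi> j) * inner a (rate_at \<sigma> \<pi> j)) \<ge> (\<Sum>j<k. b * snd (move_at \<sigma> \<pi> j))"
      proof (rule sum_mono)
        fix j
        have m: "fst (move_at \<sigma> \<pi> j) \<in> M" "snd (move_at \<sigma> \<pi> j) > 0"
          using sch by (auto simp: sched_strategy_def move_at_def)
        have "rate_at \<sigma> \<pi> j = R (fst (move_at \<sigma> \<pi> j))" by (simp add: rate_at_def \<pi>_def)
        then have "inner a (rate_at \<sigma> \<pi> j) \<ge> b" using aR[OF m(1)] by simp
        then show "b * snd (move_at \<sigma> \<pi> j) \<le> snd (move_at \<sigma> \<pi> j) * inner a (rate_at \<sigma> \<pi> j)"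
          using m(2) by (simp add: mult.commute mult_right_mono)
      qed
      ultimately show ?thesis by (simp add: sum_distrib_left)
    qed
    have upper: "inner a (state_at x0 \<sigma> \<pi> k) \<le> norm a * K" for k
    proof -
      have "state_at x0 \<sigma> \<pi> k \<in> S" using rs by (simp add: run_safe_def)
      then have "norm (state_at x0 \<sigma> \<pi> k) \<le> K" using K by blast
      then have "norm a * norm (state_at x0 \<sigma> \<pi> k) \<le> norm a * K"
        by (rule mult_left_mono) simp
      moreover have "inner a (state_at x0 \<sigma> \<pi> k) \<le> norm a * norm (state_at x0 \<sigma> \<pi> k)"
        using Cauchy_Schwarz_ineq2[of a "state_at x0 \<sigma> \<pi> k"] by linarith
      ultimately show ?thesis by linarith
    qed
    have "\<forall>\<^sub>F k in sequentially. (\<Sum>i<k. snd (move_at \<sigma> \<pi> i)) \<ge> (norm a * K - inner a x0 + 1) / b"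
      using nz by (simp add: run_nonzeno_def filterlim_at_top)
    then obtain k where k: "(\<Sum>i<k. snd (move_at \<sigma> \<pi> i)) \<ge> (norm a * K - inner a x0 + 1) / b"
      by (meson eventually_sequentially order_refl)
    then have "b * (\<Sum>i<k. snd (move_at \<sigma> \<pi> i)) \<ge> norm a * K - inner a x0 + 1"
      using ab(2) by (simp add: field_simps)
    then show False using lower[of k] upper[of k] by linarith
  qed
qed

lemma arith_step:
  fixes a :: real assumes "a \<ge> 1"
  shows "2 - 2/a + (1/a)^2 \<le> 2 - 2/(a+1)"
proof -
  have p: "a > 0" "a+1>0" using assms by auto
  have "(2 - 2/(a+1)) - (2 - 2/a + (1/a)^2) = (a - 1) / ((a+1)*a^2)"
    using p by (simp add: field_simps power2_eq_square)
  moreover have "(a - 1) / ((a+1)*a^2) \<ge> 0" using p assms by simp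
  ultimately show ?thesis by linarith
qed

lemma norm_add_sq:
  fixes v r :: "'a::real_inner"
  shows "(norm (v + t *\<^sub>R r))^2 = (norm v)^2 + 2*t*inner v r + t^2 * (norm r)^2"
  unfolding power2_norm_eq_inner
  by (simp add: inner_add_left inner_add_right inner_commute power2_eq_square algebra_simps)

lemma safe_imp_winning:
  fixes M :: "'m set" and Rs :: "'m \<Rightarrow> (real^'n) set" and S :: "(real^'n) set"
  assumes bms: "is_BMS M Rs" and safe: "mms_safe M Rs" and x0: "x0 \<in> interior S"
  shows "\<exists>\<sigma>. winning M Rs S x0 \<sigma>"
proof -
  have fin: "finite M" using bms by (auto simp: is_BMS_def)
  have "bounded (\<Union>m\<in>M. Rs m)"
    by (rule bounded_UN[OF fin]) (use bms polytope_imp_bounded in \<open>auto simp: is_BMS_def\<close>)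
  then obtain B0 where B0: "\<forall>x\<in>(\<Union>m\<in>M. Rs m). norm x \<le> B0" by (auto simp: bounded_iff)
  define B where "B = max B0 1"
  have Bpos: "B > 0" by (simp add: B_def)
  have Bb: "norm r \<le> B" if "m \<in> M" "r \<in> Rs m" for m r
    using B0 that by (force simp: B_def)
  obtain \<epsilon> where ep: "\<epsilon> > 0" "ball x0 \<epsilon> \<subseteq> S" using x0 by (auto simp: mem_interior)
  define c where "c = \<epsilon> / (2*B)"
  have cpos: "c > 0" using ep Bpos by (simp add: c_def)
  define ch where "ch h = (SOME m. m\<in>M \<and> (\<forall>r\<in>Rs m. inner (hst x0 h - x0) r \<le> 0))"
    for h :: "('m,'n) history"
  have chP: "ch h \<in> M \<and> (\<forall>r\<in>Rs (ch h). inner (hst x0 h - x0) r \<le> 0)" for h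
    unfolding ch_def by (rule someI_ex) (use cond_from_safe[OF bms safe] in blast)
  define \<sigma> where "\<sigma> h = (ch h, c / real (Suc (length h)))" for h :: "('m,'n) history"
  have sch: "sched_strategy M \<sigma>" using chP cpos by (simp add: sched_strategy_def \<sigma>_def)
  have "winning M Rs S x0 \<sigma>"
    unfolding winning_def
  proof (intro conjI allI impI sch)
    fix \<pi> assume env: "env_strategy M Rs \<pi>"
    define x where "x i = state_at x0 \<sigma> \<pi> i" for i
    have mv: "move_at \<sigma> \<pi> i = (ch (play \<sigma> \<pi> i), c / real (Suc i))" for i
      by (simp add: move_at_def \<sigma>_def length_play)
    have rin: "rate_at \<sigma> \<pi> i \<in> Rs (ch (play \<sigma> \<pi> i))" for i
      using env chP by (simp add: rate_at_def mv env_strategy_def)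
    have rn: "norm (rate_at \<sigma> \<pi> i) \<le> B" for i using Bb chP rin by blast
    have ri: "inner (x i - x0) (rate_at \<sigma> \<pi> i) \<le> 0" for i
      using chP[of "play \<sigma> \<pi> i"] rin[of i] hst_play[of x0 \<sigma> \<pi> i] by (simp add: x_def)
    have key: "(norm (x i + t *\<^sub>R rate_at \<sigma> \<pi> i - x0))^2 \<le> (norm (x i - x0))^2 + (c*B/real (Suc i))^2"
      if t: "0 \<le> t" "t \<le> c / real (Suc i)" for i t
    proof -
      let ?v = "x i - x0" and ?r = "rate_at \<sigma> \<pi> i"
      have eq: "x i + t *\<^sub>R ?r - x0 = ?v + t *\<^sub>R ?r" by (simp add: algebra_simps)
      have "(norm (?v + t *\<^sub>R ?r))^2 = (norm ?v)^2 + 2*t*inner ?v ?r + t^2 * (norm ?r)^2"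
        by (rule norm_add_sq)
      also have "\<dots> \<le> (norm ?v)^2 + t^2 * (norm ?r)^2"
        using ri[of i] t(1) by (simp add: mult_nonneg_nonpos)
      moreover have tr: "t^2 * (norm ?r)^2 \<le> (c*B/real (Suc i))^2"
      proof -
        have "t * norm ?r \<le> (c / real (Suc i)) * B"
          using t rn[of i] by (intro mult_mono) auto
        moreover have "0 \<le> t * norm ?r" using t by simp
        ultimately have "(t * norm ?r)^2 \<le> ((c / real (Suc i)) * B)^2"
          by (rule power_mono)
        then show ?thesis by (simp add: power_mult_distrib)
      qed
      ultimately have "(norm (?v + t *\<^sub>R ?r))^2 \<le> (norm ?v)^2 + (c*B/real (Suc i))^2"
        by linarith
      then show ?thesis unfolding eq .
    qed
    have bound: "(norm (x i - x0))^2 \<le> (c*B)^2 * (2 - 2/real (Suc i))" for i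
    proof (induction i)
      case 0 then show ?case by (simp add: x_def state_at_def)
    next
      case (Suc i)
      have xs: "x (Suc i) = x i + (c / real (Suc i)) *\<^sub>R rate_at \<sigma> \<pi> i"
        by (simp add: x_def state_at_def mv)
      have "(norm (x (Suc i) - x0))^2 \<le> (norm (x i - x0))^2 + (c*B/real (Suc i))^2"
        using key[of "c / real (Suc i)" i] cpos xs by simp
      also have "\<dots> \<le> (c*B)^2 * (2 - 2/real (Suc i)) + (c*B)^2 * (1/real (Suc i))^2"
        using Suc.IH by (simp add: power_divide)
      also have "\<dots> = (c*B)^2 * (2 - 2/real (Suc i) + (1/real (Suc i))^2)"
        by (simp add: algebra_simps)
      also have "\<dots> \<le> (c*B)^2 * (2 - 2/(real (Suc i)+1))"
        by (rule mult_left_mono[OF arith_step]) auto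
      also have "\<dots> = (c*B)^2 * (2 - 2/real (Suc (Suc i)))" by (simp add: add.commute)
      finally show ?case .
    qed
    have inball: "x i + t *\<^sub>R rate_at \<sigma> \<pi> i \<in> S"
      if t: "0 \<le> t" "t \<le> c / real (Suc i)" for i t
    proof -
      have "(norm (x i + t *\<^sub>R rate_at \<sigma> \<pi> i - x0))^2 \<le> (c*B)^2 * (2 - 2/real (Suc i)) + (c*B/real (Suc i))^2"
        using key[OF t] bound[of i] by linarith
      also have "\<dots> \<le> (c*B)^2 * 2"
      proof -
        have "(c*B/real (Suc i))^2 = (c*B)^2 * (1/real (Suc i))^2" by (simp add: power_divide)
        moreover have "(1/real (Suc i))^2 \<le> 2/real (Suc i)"
        proof -
          have "(1/real (Suc i))^2 \<le> 1/real (Suc i)"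
            by (rule power_le_one_iff[THEN iffD2, unfolded power_one_right] | simp add: power2_eq_square divide_simps)
          also have "\<dots> \<le> 2/real (Suc i)" by (simp add: divide_right_mono)
          finally show ?thesis .
        qed
        moreover have "(c*B)^2 * (1/real (Suc i))^2 \<le> (c*B)^2 * (2/real (Suc i))"
          by (rule mult_left_mono) (use calculation in auto)
        moreover have "(c*B)^2 * (2 - 2/real (Suc i)) + (c*B)^2 * (2/real (Suc i)) = (c*B)^2 * 2"
          by (simp add: algebra_simps)
        ultimately show ?thesis by linarith
      qed
      also have "\<dots> = \<epsilon>^2 / 2" using Bpos by (simp add: c_def power2_eq_square field_simps)
      also have "\<dots> < \<epsilon>^2" using ep by simp
      finally have "(norm (x i + t *\<^sub>R rate_at \<sigma> \<pi> i - x0))^2 < \<epsilon>^2" .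
      then have "norm (x i + t *\<^sub>R rate_at \<sigma> \<pi> i - x0) < \<epsilon>"
        using ep(1) by (simp add: power_less_imp_less_base)
      then have "x i + t *\<^sub>R rate_at \<sigma> \<pi> i \<in> ball x0 \<epsilon>"
        by (simp add: dist_norm norm_minus_commute)
      then show ?thesis using ep by blast
    qed
    show "run_safe S x0 \<sigma> \<pi>"
      unfolding run_safe_def
    proof (intro allI conjI impI)
      fix i
      show "state_at x0 \<sigma> \<pi> i \<in> S" using inball[of 0 i] cpos by (simp add: x_def)
      fix t assume "0 \<le> t \<and> t \<le> snd (move_at \<sigma> \<pi> i)"
      then show "state_at x0 \<sigma> \<pi> i + t *\<^sub>R rate_at \<sigma> \<pi> i \<in> S"
        using inball[of t i] by (simp add: x_def mv)
    qed
    have "(\<lambda>k. \<Sum>i<k. snd (move_at \<sigma> \<pi> i)) = (\<lambda>k. c * harm k)"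
      by (simp add: mv harm_altdef sum_distrib_left divide_inverse)
    moreover have "filterlim (\<lambda>k. c * harm k) at_top sequentially"
      by (rule filterlim_tendsto_pos_mult_at_top[OF tendsto_const cpos harm_at_top])
    ultimately show "run_nonzeno \<sigma> \<pi>" by (simp add: run_nonzeno_def)
  qed
  then show ?thesis by blast
qed

theorem theorem3:
  fixes M :: "'m set" and Rs :: "'m \<Rightarrow> (real^'n) set" and S :: "(real^'n) set"
    and x0 :: "real^'n"
  assumes "is_BMS M Rs"
    and "polytope S"
    and "x0 \<in> interior S"
  shows "(\<exists>\<sigma>. winning M Rs S x0 \<sigma>) \<longleftrightarrow> mms_safe M Rs"
  using winning_imp_safe[OF assms(1,2)] safe_imp_winning[OF assms(1) _ assms(3)] by blast

end
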